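(* Let $y$ be the solution of the problem $\varepsilon^2 y''(x)=f(x,y)$ on $(0,1)$, $y(0)=y(1)=0$, with $f$ and the Shishkin mesh $\{x_i\}_{i=0}^N$ as described in the context, and let $F$ be the discrete operator defined in the context. Assume that $\varepsilon\leqslant C_0/N$ for some constant $C_0>0$. Then there is a constant $C>0$ independent of $N$ and $\varepsilon$ such that $$|(Fy)_{N/4}|\leqslant\frac{C}{N},$$ where $(Fy)_{N/4}$ is the component with index $N/4$ (corresponding to the mesh point $x_{N/4}=\lambda$) of $F$ applied to the vector $(y(x_0),\ldots,y(x_N))^T$.
   Context: Problem: $\varepsilon^2y''(x)=f(x,y)$ on $(0,1)$, $y(0)=y(1)=0$, where $\varepsilon>0$ is a small parameter, $f\in C^k([0,1]\times\mathbb{R})$ for some $k\geq 2$, and $f_y=\partial f/\partial y\geq m>0$ on $[0,1]\times\mathbb{R}$ for a constant $m$; this problem has a unique solution $y$. Shishkin mesh: $N$ is a positive integer divisible by 4, $\lambda=\min\{1/4,\,2\varepsilon\ln N/\sqrt{m}\}$, and it is assumed that $\lambda=2\varepsilon\ln N/\sqrt{m}$. The mesh $0=x_0<x_1<\cdots<x_N=1$ is equidistant on each of $[0,\lambda]$ (with $N/4$ subintervals), $[\lambda,1-\lambda]$ (with $N/2$ subintervals) and $[1-\lambda,1]$ (with $N/4$ subintervals); thus $x_{N/4}=\lambda$, $x_{3N/4}=1-\lambda$, subintervals in $[0,\lambda]\cup[1-\lambda,1]$ have length $4\lambda/N$ and those in $[\lambda,1-\lambda]$ have length $2(1-2\lambda)/N$.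 Scheme: $\gamma$ is a constant with $\gamma\geq f_y$, and $\beta=\sqrt{\gamma}/\varepsilon$. For $i=1,\ldots,N$ let $\ell_i=x_i-x_{i-1}$, $d_i=\beta/\tanh(\beta\ell_i)$, $a_i=\beta/\sinh(\beta\ell_i)$, $\Delta d_i=d_i-a_i$. For $v=(v_0,\ldots,v_N)^T\in\mathbb{R}^{N+1}$ define $Fv\in\mathbb{R}^{N+1}$ by $(Fv)_0=v_0$, $(Fv)_N=v_N$ and, for $i=1,\ldots,N-1$, $$(Fv)_i=\frac{\gamma}{\Delta d_i+\Delta d_{i+1}}\Big[\tfrac{a_i+d_i}{2}v_{i-1}-\big(\tfrac{a_i+d_i}{2}+\tfrac{a_{i+1}+d_{i+1}}{2}\big)v_i+\tfrac{a_{i+1}+d_{i+1}}{2}v_{i+1}-\tfrac{\Delta d_i}{\gamma}f\big(\tfrac{x_{i-1}+x_i}{2},\tfrac{v_{i-1}+v_i}{2}\big)-\tfrac{\Delta d_{i+1}}{\gamma}f\big(\tfrac{x_{i}+x_{i+1}}{2},\tfrac{v_{i}+v_{i+1}}{2}\big)\Big].$$ *)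

theory Defs
  imports "HOL-Analysis.Analysis"
begin

definition strip :: "(real \<times> real) set" where
  "strip = {0..1} \<times> UNIV"

definition C2_with_partials ::
  "(real \<times> real \<Rightarrow> real) \<Rightarrow> (real \<times> real \<Rightarrow> real) \<Rightarrow> (real \<times> real \<Rightarrow> real) \<Rightarrow>
   (real \<times> real \<Rightarrow> real) \<Rightarrow> (real \<times> real \<Rightarrow> real) \<Rightarrow> (real \<times> real \<Rightarrow> real) \<Rightarrow>
   (real \<times> real \<Rightarrow> real) \<Rightarrow> (real \<times> real) set \<Rightarrow> bool" where
  "C2_with_partials f fx fy fxx fxy fyx fyy S \<longleftrightarrow>
     (\<forall>z\<in>S. (f has_derivative (\<lambda>h. fx z * fst h + fy z * snd h)) (at z within S)) \<and>
     (\<forall>z\<in>S. (fx has_derivative (\<lambda>h. fxx z * fst h + fxy z * snd h)) (at z within S)) \<and>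
     (\<forall>z\<in>S. (fy has_derivative (\<lambda>h. fyx z * fst h + fyy z * snd h)) (at z within S)) \<and>
     continuous_on S fxx \<and> continuous_on S fxy \<and> continuous_on S fyx \<and> continuous_on S fyy"

definition bvp_solution :: "real \<Rightarrow> (real \<times> real \<Rightarrow> real) \<Rightarrow> (real \<Rightarrow> real) \<Rightarrow> bool" where
  "bvp_solution eps f y \<longleftrightarrow>
     continuous_on {0..1} y \<and> y 0 = 0 \<and> y 1 = 0 \<and>
     (\<exists>y' y''. \<forall>x\<in>{0<..<1}. (y has_real_derivative y' x) (at x) \<and>
                               (y' has_real_derivative y'' x) (at x) \<and>
                               eps\<^sup>2 * y'' x = f (x, y x))"

definition shishkin_lambda :: "real \<Rightarrow> real \<Rightarrow> nat \<Rightarrow> real" where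
  "shishkin_lambda eps m N = min (1/4) (2 * eps * ln (real N) / sqrt m)"

definition shishkin_node :: "real \<Rightarrow> real \<Rightarrow> nat \<Rightarrow> nat \<Rightarrow> real" where
  "shishkin_node eps m N i =
     (let lam = shishkin_lambda eps m N in
      if i \<le> N div 4 then real i * (4 * lam / real N)
      else if i \<le> 3 * N div 4 then lam + real (i - N div 4) * (2 * (1 - 2 * lam) / real N)
      else 1 - lam + real (i - 3 * N div 4) * (4 * lam / real N))"

definition scheme_F :: "real \<Rightarrow> real \<Rightarrow> (real \<times> real \<Rightarrow> real) \<Rightarrow> nat \<Rightarrow> (nat \<Rightarrow> real)
    \<Rightarrow> (nat \<Rightarrow> real) \<Rightarrow> nat \<Rightarrow> real" where
  "scheme_F gam eps f N x v i =
    (if i = 0 \<or> i = N then v i else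
     (let beta = sqrt gam / eps;
          l = (\<lambda>j. x j - x (j - 1));
          d = (\<lambda>j. beta / tanh (beta * l j));
          a = (\<lambda>j. beta / sinh (beta * l j));
          dd = (\<lambda>j. d j - a j)
      in gam / (dd i + dd (Suc i)) *
         ((a i + d i) / 2 * v (i - 1)
          - ((a i + d i) / 2 + (a (Suc i) + d (Suc i)) / 2) * v i
          + (a (Suc i) + d (Suc i)) / 2 * v (Suc i)
          - dd i / gam * f ((x (i - 1) + x i) / 2, (v (i - 1) + v i) / 2)
          - dd (Suc i) / gam * f ((x i + x (Suc i)) / 2, (v i + v (Suc i)) / 2))))"

end

theory Submission
  imports Defs
begin

lemma f_cont:
  assumes "C2_with_partials f fx fy fxx fxy fyx fyy strip"
  shows "continuous_on strip f"
  using assms unfolding C2_with_partials_def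
  by (intro has_derivative_continuous_on) blast

lemma f_mono:
  assumes "C2_with_partials f fx fy fxx fxy fyx fyy strip"
    and "\<forall>z\<in>strip. fy z \<ge> m"
    and x: "x \<in> {0..1}" and uv: "u \<le> v"
  shows "f (x, v) - f (x, u) \<ge> m * (v - u)"
proof -
  have D: "\<And>z. z \<in> strip \<Longrightarrow> (f has_derivative (\<lambda>h. fx z * fst h + fy z * snd h)) (at z within strip)"
    using assms(1) unfolding C2_with_partials_def by blast
  have der: "((\<lambda>t. f (x, t)) has_real_derivative fy (x, t)) (at t)" for t
  proof -
    have "((\<lambda>t. f (x, t)) has_derivative (\<lambda>h. fx (x,t) * fst (0::real, h) + fy (x,t) * snd (0::real, h))) (at t within UNIV)"
      apply (rule has_derivative_in_compose2[OF D, of "\<lambda>t. (x, t)" UNIV t "\<lambda>h. (0, h)"])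
      using x by (auto simp: strip_def intro!: derivative_eq_intros)
    moreover have "(\<lambda>h. h * fy (x, t)) = (*) (fy (x, t))" by (rule ext) simp
    ultimately show ?thesis by (simp add: has_field_derivative_def)
  qed
  have "(\<lambda>t. f (x, t) - m * t) u \<le> (\<lambda>t. f (x, t) - m * t) v"
    apply (rule DERIV_nonneg_imp_nondecreasing[OF uv])
    apply (rule exI[of _ "fy (x, _) - m"])
    using assms(2) x by (auto intro!: derivative_eq_intros der simp: strip_def)
  then show ?thesis by (simp add: algebra_simps)
qed

lemma f_lip:
  assumes "C2_with_partials f fx fy fxx fxy fyx fyy strip" and "M \<ge> 0"
  shows "\<exists>L>0. \<forall>s\<in>{0..1}. \<forall>t\<in>{0..1}. \<forall>u\<in>{-M..M}. \<forall>v\<in>{-M..M}.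
           \<bar>f (s, u) - f (t, v)\<bar> \<le> L * (\<bar>s - t\<bar> + \<bar>u - v\<bar>)"
proof -
  let ?K = "{0..1::real} \<times> {-M..M::real}"
  have Ks: "?K \<subseteq> strip" by (auto simp: strip_def)
  have D: "\<And>z. z \<in> strip \<Longrightarrow> (f has_derivative (\<lambda>h. fx z * fst h + fy z * snd h)) (at z within strip)"
    using assms(1) unfolding C2_with_partials_def by blast
  have cx: "continuous_on strip fx" 
    using assms(1) unfolding C2_with_partials_def
    by (intro has_derivative_continuous_on) blast
  have cy: "continuous_on strip fy" 
    using assms(1) unfolding C2_with_partials_def
    by (intro has_derivative_continuous_on) blast
  have "continuous_on ?K (\<lambda>z. \<bar>fx z\<bar> + \<bar>fy z\<bar>)"
    using continuous_on_subset[OF cx Ks] continuous_on_subset[OF cy Ks]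
    by (intro continuous_intros)
  moreover have "compact ?K" by (intro compact_Times compact_Icc)
  moreover have "?K \<noteq> {}" using assms(2) by auto
  ultimately obtain z0 where "z0 \<in> ?K" and z0: "\<forall>z\<in>?K. \<bar>fx z\<bar> + \<bar>fy z\<bar> \<le> \<bar>fx z0\<bar> + \<bar>fy z0\<bar>"
    using continuous_attains_sup[of ?K] by blast
  define L where "L = \<bar>fx z0\<bar> + \<bar>fy z0\<bar> + 1"
  have Lpos: "L > 0" unfolding L_def by simp
  have bnd: "\<And>z. z \<in> ?K \<Longrightarrow> onorm (\<lambda>h. fx z * fst h + fy z * snd h) \<le> L"
  proof -
    fix z assume z: "z \<in> ?K"
    show "onorm (\<lambda>h. fx z * fst h + fy z * snd h) \<le> L"
    proof (rule onorm_le)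
      fix h :: "real \<times> real"
      have "norm (fx z * fst h + fy z * snd h) \<le> \<bar>fx z\<bar> * \<bar>fst h\<bar> + \<bar>fy z\<bar> * \<bar>snd h\<bar>"
        by (simp add: abs_mult[symmetric] abs_triangle_ineq)
      also have "\<dots> \<le> \<bar>fx z\<bar> * norm h + \<bar>fy z\<bar> * norm h"
        using norm_fst_le[of "fst h" "snd h"] norm_snd_le[of "snd h" "fst h"]
        by (intro add_mono mult_left_mono) auto
      also have "\<dots> \<le> L * norm h"
      proof -
        have "\<bar>fx z\<bar> + \<bar>fy z\<bar> \<le> L" using bspec[OF z0 z] unfolding L_def by linarith
        then show ?thesis by (simp add: distrib_right[symmetric] mult_right_mono)
      qed
      finally show "norm (fx z * fst h + fy z * snd h) \<le> L * norm h" .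
    qed
  qed
  have lip: "\<And>a b. a \<in> ?K \<Longrightarrow> b \<in> ?K \<Longrightarrow> norm (f a - f b) \<le> L * norm (a - b)"
    by (rule differentiable_bound[of ?K f "\<lambda>z h. fx z * fst h + fy z * snd h" L])
       (auto intro: convex_Times bnd has_derivative_subset[OF D Ks] simp: strip_def)
  show ?thesis
  proof (intro exI[of _ L] conjI Lpos ballI)
    fix s t u v assume "s \<in> {0..1::real}" "t \<in> {0..1::real}" "u \<in> {-M..M}" "v \<in> {-M..M}"
    then have "norm (f (s,u) - f (t,v)) \<le> L * norm ((s,u) - (t,v))" by (intro lip) auto
    also have "norm ((s,u) - (t,v)) \<le> \<bar>s - t\<bar> + \<bar>u - v\<bar>"
      using norm_Pair_le[of "s - t" "u - v"] by simp
    finally show "\<bar>f (s, u) - f (t, v)\<bar> \<le> L * (\<bar>s - t\<bar> + \<bar>u - v\<bar>)"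
      using Lpos by (simp add: order_trans mult_left_mono)
  qed
qed

lemma maxp:
  fixes w w' w'' :: "real \<Rightarrow> real"
  assumes ab: "a < b" and cont: "continuous_on {a..b} w" and wa: "w a \<le> 0" and wb: "w b \<le> 0"
    and d1: "\<forall>x\<in>{a<..<b}. (w has_real_derivative w' x) (at x)"
    and d2: "\<forall>x\<in>{a<..<b}. (w' has_real_derivative w'' x) (at x)"
    and pos: "\<forall>x\<in>{a<..<b}. w x > 0 \<longrightarrow> w'' x > 0"
  shows "\<forall>x\<in>{a..b}. w x \<le> 0"
proof (rule ccontr)
  assume "\<not> ?thesis"
  then obtain x0 where x0: "x0 \<in> {a..b}" "w x0 > 0" by force
  obtain c where c: "c \<in> {a..b}" and cmax: "\<forall>y\<in>{a..b}. w y \<le> w c"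
    using continuous_attains_sup[OF compact_Icc _ cont] ab by auto
  have wc: "w c > 0" using bspec[OF cmax x0(1)] x0(2) by linarith
  have "c \<noteq> a" "c \<noteq> b" using wc wa wb by auto
  then have cin: "c \<in> {a<..<b}" using c by auto
  have "w' c = 0"
  proof -
    have 1: "(w has_real_derivative w' c) (at c)" using d1 cin by blast
    have 2: "0 < min (c - a) (b - c)" using cin by auto
    have 3: "\<forall>y. \<bar>c - y\<bar> < min (c - a) (b - c) \<longrightarrow> w y \<le> w c"
    proof (intro allI impI)
      fix y assume "\<bar>c - y\<bar> < min (c - a) (b - c)"
      then have "y \<in> {a..b}" by (auto simp: abs_less_iff)
      then show "w y \<le> w c" using cmax by blast
    qed
    show ?thesis using DERIV_local_max[OF 1 2 3] .
  qed
  moreover have "w'' c > 0" using pos cin wc by blast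
  moreover have der2: "(w' has_real_derivative w'' c) (at c)" using d2 cin by blast
  ultimately obtain d where d: "d > 0" and dd: "\<forall>h>0. h < d \<longrightarrow> 0 < w' (c + h)"
    using DERIV_pos_inc_right[OF der2] by (metis add_0)
  define h where "h = min (d/2) ((b - c)/2)"
  have h: "h > 0" "h < d" "c + h < b"
  proof -
    have "h \<le> d/2" "h \<le> (b-c)/2" unfolding h_def by (rule min.cobounded1, rule min.cobounded2)
    moreover have "h > 0" unfolding h_def using d cin by simp
    ultimately show "h > 0" "h < d" "c + h < b" using d cin by auto
  qed
  have "\<exists>z. c < z \<and> z < c + h \<and> w (c + h) - w c = (c + h - c) * w' z"
  proof (rule MVT2)
    show "c < c + h" using h by simp
    fix x assume "c \<le> x" "x \<le> c + h"
    then have "x \<in> {a<..<b}" using h cin by auto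
    then show "(w has_real_derivative w' x) (at x)" using d1 by blast
  qed
  then obtain z where z: "z > c" "z < c + h" "w (c + h) - w c = h * w' z" by auto
  have "w' z > 0" using dd[rule_format, of "z - c"] z h by auto
  then have "h * w' z > 0" using h by simp
  then have "w (c + h) > w c" using z(3) by linarith
  moreover have "c + h \<in> {a..b}" using h cin by auto
  ultimately show False using cmax by (meson not_le)
qed

lemma deriv_right_end:
  fixes w :: "real \<Rightarrow> real"
  assumes "p < q" "(w has_real_derivative D) (at q)" "w q = 0" "\<forall>t\<in>{p..q}. w t \<ge> 0"
  shows "D \<le> 0"
proof (rule ccontr)
  assume "\<not> D \<le> 0"
  then obtain d where d: "d > 0" "\<forall>h>0. h < d \<longrightarrow> w (q - h) < w q"
    using DERIV_pos_inc_left[OF assms(2)] by force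
  define h where "h = min (d/2) ((q - p)/2)"
  have "h > 0" "h < d" "q - h \<ge> p" "q - h \<le> q"
  proof -
    have "h \<le> d/2" "h \<le> (q-p)/2" unfolding h_def by (rule min.cobounded1, rule min.cobounded2)
    moreover have "h > 0" unfolding h_def using d assms(1) by simp
    ultimately show "h > 0" "h < d" "q - h \<ge> p" "q - h \<le> q" using d assms(1) by auto
  qed
  then have "w (q - h) < 0" using d(2) assms(3) by auto
  moreover have "w (q - h) \<ge> 0" using assms(4) \<open>q - h \<ge> p\<close> \<open>q - h \<le> q\<close> by auto
  ultimately show False by linarith
qed

lemma deriv_left_end:
  fixes w :: "real \<Rightarrow> real"
  assumes "p < q" "(w has_real_derivative D) (at p)" "w p = 0" "\<forall>t\<in>{p..q}. w t \<ge> 0"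
  shows "D \<ge> 0"
proof (rule ccontr)
  assume "\<not> D \<ge> 0"
  then obtain d where d: "d > 0" "\<forall>h>0. h < d \<longrightarrow> w (p + h) < w p"
    using DERIV_neg_dec_right[OF assms(2)] by force
  define h where "h = min (d/2) ((q - p)/2)"
  have "h > 0" "h < d" "p + h \<ge> p" "p + h \<le> q"
  proof -
    have "h \<le> d/2" "h \<le> (q-p)/2" unfolding h_def by (rule min.cobounded1, rule min.cobounded2)
    moreover have "h > 0" unfolding h_def using d assms(1) by simp
    ultimately show "h > 0" "h < d" "p + h \<ge> p" "p + h \<le> q" using d assms(1) by auto
  qed
  then have "w (p + h) < 0" using d(2) assms(3) by auto
  moreover have "w (p + h) \<ge> 0" using assms(4) \<open>p + h \<ge> p\<close> \<open>p + h \<le> q\<close> by auto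
  ultimately show False by linarith
qed

definition Ucomp :: "real \<Rightarrow> real \<Rightarrow> real \<Rightarrow> real \<Rightarrow> real \<Rightarrow> real \<Rightarrow> real \<Rightarrow> real \<Rightarrow> real" where
  "Ucomp gam bt p q yp yq c x = -c/gam + (yq + c/gam) * sinh (bt*(x-p)) / sinh (bt*(q-p))
      + (yp + c/gam) * sinh (bt*(q-x)) / sinh (bt*(q-p))"

definition Ucomp' :: "real \<Rightarrow> real \<Rightarrow> real \<Rightarrow> real \<Rightarrow> real \<Rightarrow> real \<Rightarrow> real \<Rightarrow> real \<Rightarrow> real" where
  "Ucomp' gam bt p q yp yq c x = (yq + c/gam) * bt * cosh (bt*(x-p)) / sinh (bt*(q-p))
      - (yp + c/gam) * bt * cosh (bt*(q-x)) / sinh (bt*(q-p))"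

lemma Ucomp_deriv: "gam \<noteq> 0 \<Longrightarrow> bt*(q-p) \<noteq> 0 \<Longrightarrow> (Ucomp gam bt p q yp yq c has_real_derivative Ucomp' gam bt p q yp yq c x) (at x)"
  unfolding Ucomp_def[abs_def] Ucomp'_def
  by (auto intro!: derivative_eq_intros simp: field_simps)

lemma Ucomp'_deriv: "gam \<noteq> 0 \<Longrightarrow> bt*(q-p) \<noteq> 0 \<Longrightarrow> (Ucomp' gam bt p q yp yq c has_real_derivative bt^2 * (Ucomp gam bt p q yp yq c x + c/gam)) (at x)"
  unfolding Ucomp_def Ucomp'_def[abs_def]
  by (auto intro!: derivative_eq_intros simp: field_simps power2_eq_square)

lemma Ucomp_p: "bt*(q-p) \<noteq> 0 \<Longrightarrow> Ucomp gam bt p q yp yq c p = yp"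
  unfolding Ucomp_def by (simp add: field_simps)
lemma Ucomp_q: "bt*(q-p) \<noteq> 0 \<Longrightarrow> Ucomp gam bt p q yp yq c q = yq"
  unfolding Ucomp_def by (simp add: field_simps)

lemma Ucomp_cont: "bt*(q-p) \<noteq> 0 \<Longrightarrow> continuous_on A (Ucomp gam bt p q yp yq c)"
  unfolding Ucomp_def[abs_def] by (intro continuous_intros) auto

lemma aux_eq: "eps^2*bt^2 = gam \<Longrightarrow> gam \<noteq> 0 \<Longrightarrow> eps^2*(bt^2*(X + c/gam) - Y) = gam*X + c - eps^2*(Y::real)"
proof -
  assume a: "eps^2*bt^2 = gam" "gam \<noteq> 0"
  have "eps^2*(bt^2*(X + c/gam)) = (eps^2*bt^2)*(X + c/gam)" by (simp only: mult.assoc)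
  also have "\<dots> = gam*X + c" using a by (simp add: distrib_left)
  finally show ?thesis by (simp add: right_diff_distrib)
qed

lemma aux_eq2: "eps^2*bt^2 = gam \<Longrightarrow> gam \<noteq> 0 \<Longrightarrow> eps^2*(Y - bt^2*(X + c/gam)) = eps^2*(Y::real) - gam*X - c"
  using aux_eq[of eps bt gam X c Y] by (simp add: algebra_simps)

lemma compare:
  fixes y y' y'' :: "real \<Rightarrow> real"
  assumes eps: "eps > 0" and gam: "gam > 0" and pq: "p < q"
    and cont: "continuous_on {p..q} y"
    and d1: "\<forall>x\<in>{p<..<q}. (y has_real_derivative y' x) (at x)"
    and d2: "\<forall>x\<in>{p<..<q}. (y' has_real_derivative y'' x) (at x)"
    and bnd: "\<forall>x\<in>{p<..<q}. G - \<sigma> \<le> eps^2 * y'' x - gam * y x \<and> eps^2 * y'' x - gam * y x \<le> G + \<sigma>"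
  shows "\<forall>x\<in>{p..q}. Ucomp gam (sqrt gam / eps) p q (y p) (y q) (G + \<sigma>) x \<le> y x
               \<and> y x \<le> Ucomp gam (sqrt gam / eps) p q (y p) (y q) (G - \<sigma>) x"
proof -
  define bt where "bt = sqrt gam / eps"
  have bt: "bt > 0" using eps gam unfolding bt_def by simp
  have ebt: "eps^2 * bt^2 = gam" using eps gam unfolding bt_def by (simp add: power_divide)
  have nz: "bt*(q-p) \<noteq> 0" using bt pq by simp
  have gnz: "gam \<noteq> 0" using gam by simp
  let ?U = "Ucomp gam bt p q (y p) (y q)"
  let ?U' = "Ucomp' gam bt p q (y p) (y q)"
  have up: "\<forall>x\<in>{p..q}. ?U (G + \<sigma>) x - y x \<le> 0"
  proof (rule maxp[OF pq, where w' = "\<lambda>x. ?U' (G+\<sigma>) x - y' x"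
        and w'' = "\<lambda>x. bt^2 * (?U (G+\<sigma>) x + (G+\<sigma>)/gam) - y'' x"])
    show "continuous_on {p..q} (\<lambda>x. ?U (G + \<sigma>) x - y x)"
      by (intro continuous_intros Ucomp_cont[OF nz] cont)
    show "?U (G + \<sigma>) p - y p \<le> 0" "?U (G + \<sigma>) q - y q \<le> 0" using Ucomp_p[OF nz] Ucomp_q[OF nz] by simp_all
    show "\<forall>x\<in>{p<..<q}. ((\<lambda>x. ?U (G + \<sigma>) x - y x) has_real_derivative ?U' (G+\<sigma>) x - y' x) (at x)"
      using d1 by (auto intro!: derivative_eq_intros Ucomp_deriv[OF _ nz] simp: gnz)
    show "\<forall>x\<in>{p<..<q}. ((\<lambda>x. ?U' (G+\<sigma>) x - y' x) has_real_derivative bt^2 * (?U (G+\<sigma>) x + (G+\<sigma>)/gam) - y'' x) (at x)"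
      using d2 by (auto intro!: derivative_eq_intros Ucomp'_deriv[OF _ nz] simp: gnz)
    show "\<forall>x\<in>{p<..<q}. ?U (G + \<sigma>) x - y x > 0 \<longrightarrow> bt^2 * (?U (G+\<sigma>) x + (G+\<sigma>)/gam) - y'' x > 0"
    proof (intro ballI impI)
      fix x assume x: "x \<in> {p<..<q}" and w: "?U (G + \<sigma>) x - y x > 0"
      have "eps^2 * (bt^2 * (?U (G+\<sigma>) x + (G+\<sigma>)/gam) - y'' x) = gam * ?U (G+\<sigma>) x + (G + \<sigma>) - eps^2 * y'' x"
        using gam ebt by (intro aux_eq aux_eq2) auto
      also have "\<dots> \<ge> gam * (?U (G+\<sigma>) x - y x)" using bnd x by (auto simp: algebra_simps)
      finally have "eps^2 * (bt^2 * (?U (G+\<sigma>) x + (G+\<sigma>)/gam) - y'' x) > 0"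
        using w gam by (smt (verit) mult_pos_pos)
      then show "bt^2 * (?U (G+\<sigma>) x + (G+\<sigma>)/gam) - y'' x > 0"
        using eps by (simp add: zero_less_mult_iff)
    qed
  qed
  have lo: "\<forall>x\<in>{p..q}. y x - ?U (G - \<sigma>) x \<le> 0"
  proof (rule maxp[OF pq, where w' = "\<lambda>x. y' x - ?U' (G-\<sigma>) x"
        and w'' = "\<lambda>x. y'' x - bt^2 * (?U (G-\<sigma>) x + (G-\<sigma>)/gam)"])
    show "continuous_on {p..q} (\<lambda>x. y x - ?U (G - \<sigma>) x)"
      by (intro continuous_intros Ucomp_cont[OF nz] cont)
    show "y p - ?U (G - \<sigma>) p \<le> 0" "y q - ?U (G - \<sigma>) q \<le> 0" using Ucomp_p[OF nz] Ucomp_q[OF nz] by simp_all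
    show "\<forall>x\<in>{p<..<q}. ((\<lambda>x. y x - ?U (G - \<sigma>) x) has_real_derivative y' x - ?U' (G-\<sigma>) x) (at x)"
      using d1 by (auto intro!: derivative_eq_intros Ucomp_deriv[OF _ nz] simp: gnz)
    show "\<forall>x\<in>{p<..<q}. ((\<lambda>x. y' x - ?U' (G-\<sigma>) x) has_real_derivative y'' x - bt^2 * (?U (G-\<sigma>) x + (G-\<sigma>)/gam)) (at x)"
      using d2 by (auto intro!: derivative_eq_intros Ucomp'_deriv[OF _ nz] simp: gnz)
    show "\<forall>x\<in>{p<..<q}. y x - ?U (G - \<sigma>) x > 0 \<longrightarrow> y'' x - bt^2 * (?U (G-\<sigma>) x + (G-\<sigma>)/gam) > 0"
    proof (intro ballI impI)
      fix x assume x: "x \<in> {p<..<q}" and w: "y x - ?U (G - \<sigma>) x > 0"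
      have "eps^2 * (y'' x - bt^2 * (?U (G-\<sigma>) x + (G-\<sigma>)/gam)) = eps^2 * y'' x - gam * ?U (G-\<sigma>) x - (G - \<sigma>)"
        using gam ebt by (intro aux_eq aux_eq2) auto
      also have "\<dots> \<ge> gam * (y x - ?U (G-\<sigma>) x)" using bnd x by (auto simp: algebra_simps)
      finally have "eps^2 * (y'' x - bt^2 * (?U (G-\<sigma>) x + (G-\<sigma>)/gam)) > 0"
        using w gam by (smt (verit) mult_pos_pos)
      then show "y'' x - bt^2 * (?U (G-\<sigma>) x + (G-\<sigma>)/gam) > 0"
        using eps by (simp add: zero_less_mult_iff)
    qed
  qed
  show ?thesis using up lo unfolding bt_def by auto
qed

lemma Ucomp'_q: "bt*(q-p) \<noteq> 0 \<Longrightarrow> Ucomp' gam bt p q yp yq c q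
   = (bt / tanh (bt*(q-p))) * (yq + c/gam) - (bt / sinh (bt*(q-p))) * (yp + c/gam)"
proof -
  assume nz: "bt*(q-p) \<noteq> 0"
  have "cosh (bt*(q-p)) \<noteq> 0" using cosh_real_ge_1[of "bt*(q-p)"] by linarith
  moreover have "sinh (bt*(q-p)) \<noteq> 0" using nz by simp
  ultimately show ?thesis unfolding Ucomp'_def tanh_def by (simp add: field_simps)
qed

lemma Ucomp'_p: "bt*(q-p) \<noteq> 0 \<Longrightarrow> Ucomp' gam bt p q yp yq c p
   = (bt / sinh (bt*(q-p))) * (yq + c/gam) - (bt / tanh (bt*(q-p))) * (yp + c/gam)"
proof -
  assume nz: "bt*(q-p) \<noteq> 0"
  have "cosh (bt*(q-p)) \<noteq> 0" using cosh_real_ge_1[of "bt*(q-p)"] by linarith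
  moreover have "sinh (bt*(q-p)) \<noteq> 0" using nz by simp
  ultimately show ?thesis unfolding Ucomp'_def tanh_def by (simp add: field_simps)
qed

lemma flux:
  fixes y y' y'' :: "real \<Rightarrow> real"
  assumes eps: "eps > 0" and gam: "gam > 0" and pq: "p < q"
    and cont: "continuous_on {p..q} y"
    and d1: "\<forall>x\<in>{p<..<q}. (y has_real_derivative y' x) (at x)"
    and d2: "\<forall>x\<in>{p<..<q}. (y' has_real_derivative y'' x) (at x)"
    and bnd: "\<forall>x\<in>{p<..<q}. G - \<sigma> \<le> eps^2 * y'' x - gam * y x \<and> eps^2 * y'' x - gam * y x \<le> G + \<sigma>"
  defines "bt \<equiv> sqrt gam / eps"
  defines "dq \<equiv> bt / tanh (bt*(q-p))" and "aq \<equiv> bt / sinh (bt*(q-p))"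
  shows "(y has_real_derivative Dq) (at q) \<Longrightarrow>
           \<bar>Dq - (dq * y q - aq * y p + (dq - aq) * G / gam)\<bar> \<le> (dq - aq) * \<sigma> / gam"
    and "(y has_real_derivative Dp) (at p) \<Longrightarrow>
           \<bar>Dp - (aq * y q - dq * y p - (dq - aq) * G / gam)\<bar> \<le> (dq - aq) * \<sigma> / gam"
proof -
  have bt: "bt > 0" using eps gam unfolding bt_def by simp
  have nz: "bt*(q-p) \<noteq> 0" using bt pq by simp
  have gnz: "gam \<noteq> 0" using gam by simp
  note cmp = compare[OF eps gam pq cont d1 d2 bnd, folded bt_def]
  let ?U = "Ucomp gam bt p q (y p) (y q)"
  let ?U' = "Ucomp' gam bt p q (y p) (y q)"
  have w1: "\<forall>t\<in>{p..q}. (\<lambda>x. y x - ?U (G+\<sigma>) x) t \<ge> 0" using cmp by auto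
  have w2: "\<forall>t\<in>{p..q}. (\<lambda>x. ?U (G-\<sigma>) x - y x) t \<ge> 0" using cmp by auto
  have u: "\<And>c. ?U c p = y p" "\<And>c. ?U c q = y q" using Ucomp_p[OF nz] Ucomp_q[OF nz] by auto
  {
    assume D: "(y has_real_derivative Dq) (at q)"
    have "Dq - ?U' (G+\<sigma>) q \<le> 0"
      by (rule deriv_right_end[OF pq _ _ w1]) (auto intro!: derivative_eq_intros D Ucomp_deriv[OF gnz nz] simp: u)
    moreover have "?U' (G-\<sigma>) q - Dq \<le> 0"
      by (rule deriv_right_end[OF pq _ _ w2]) (auto intro!: derivative_eq_intros D Ucomp_deriv[OF gnz nz] simp: u)
    moreover have "?U' (G+\<sigma>) q = (dq * y q - aq * y p + (dq - aq) * G / gam) + (dq - aq) * \<sigma> / gam"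
      "?U' (G-\<sigma>) q = (dq * y q - aq * y p + (dq - aq) * G / gam) - (dq - aq) * \<sigma> / gam"
      unfolding Ucomp'_q[OF nz] dq_def[symmetric] aq_def[symmetric]
      using gnz by (simp_all add: field_simps)
    ultimately show "\<bar>Dq - (dq * y q - aq * y p + (dq - aq) * G / gam)\<bar> \<le> (dq - aq) * \<sigma> / gam"
      by (simp add: abs_le_iff)
  }
  {
    assume D: "(y has_real_derivative Dp) (at p)"
    have "Dp - ?U' (G+\<sigma>) p \<ge> 0"
      by (rule deriv_left_end[OF pq _ _ w1]) (auto intro!: derivative_eq_intros D Ucomp_deriv[OF gnz nz] simp: u)
    moreover have "?U' (G-\<sigma>) p - Dp \<ge> 0"
      by (rule deriv_left_end[OF pq _ _ w2]) (auto intro!: derivative_eq_intros D Ucomp_deriv[OF gnz nz] simp: u)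
    moreover have "?U' (G+\<sigma>) p = (aq * y q - dq * y p - (dq - aq) * G / gam) - (dq - aq) * \<sigma> / gam"
      "?U' (G-\<sigma>) p = (aq * y q - dq * y p - (dq - aq) * G / gam) + (dq - aq) * \<sigma> / gam"
      unfolding Ucomp'_p[OF nz] dq_def[symmetric] aq_def[symmetric]
      using gnz by (simp_all add: field_simps)
    ultimately show "\<bar>Dp - (aq * y q - dq * y p - (dq - aq) * G / gam)\<bar> \<le> (dq - aq) * \<sigma> / gam"
      by (simp add: abs_le_iff)
  }
qed

lemma ybound:
  fixes y y' y'' :: "real \<Rightarrow> real" and f :: "real \<times> real \<Rightarrow> real"
  assumes eps: "eps > 0" and m: "m > 0"
    and cont: "continuous_on {0..1} y" and y0: "y 0 = 0" and y1: "y 1 = 0"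
    and d1: "\<forall>x\<in>{0<..<1}. (y has_real_derivative y' x) (at x)"
    and d2: "\<forall>x\<in>{0<..<1}. (y' has_real_derivative y'' x) (at x)"
    and eq: "\<forall>x\<in>{0<..<1}. eps^2 * y'' x = f (x, y x)"
    and mono: "\<forall>x\<in>{0..1}. \<forall>u v. u \<le> v \<longrightarrow> f (x, v) - f (x, u) \<ge> m * (v - u)"
    and A: "\<forall>x\<in>{0..1}. \<bar>f (x, 0)\<bar> \<le> A"
  shows "\<forall>x\<in>{0..1}. \<bar>y x\<bar> \<le> A / m"
proof -
  have A0: "A \<ge> 0" using A by (meson abs_ge_zero atLeastAtMost_iff order_trans zero_le_one order_refl)
  have up: "\<forall>x\<in>{0..1}. y x - A/m \<le> 0"
  proof (rule maxp[where w' = y' and w'' = y''])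
    show "continuous_on {0..1} (\<lambda>x. y x - A/m)" by (intro continuous_intros cont)
    show "y 0 - A/m \<le> 0" "y 1 - A/m \<le> 0" using y0 y1 A0 m by auto
    show "\<forall>x\<in>{0<..<1}. ((\<lambda>x. y x - A/m) has_real_derivative y' x) (at x)"
      using d1 by (auto intro!: derivative_eq_intros)
    show "\<forall>x\<in>{0<..<1}. (y' has_real_derivative y'' x) (at x)" using d2 .
    show "\<forall>x\<in>{0<..<1}. y x - A/m > 0 \<longrightarrow> y'' x > 0"
    proof (intro ballI impI)
      fix x :: real assume x: "x \<in> {0<..<1}" and w: "y x - A/m > 0"
      have ypos: "y x \<ge> 0" using w A0 m by (smt (verit) divide_nonneg_pos)
      have "f (x, y x) - f (x, 0) \<ge> m * (y x - 0)" using mono[rule_format, of x 0 "y x"] x ypos by auto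
      moreover have "f (x, 0) \<ge> -A" using A[rule_format, of x] x by (auto simp: abs_le_iff)
      moreover have "m * y x > A" using w m by (simp add: field_simps)
      ultimately have "eps^2 * y'' x > 0" using eq x by auto
      then show "y'' x > 0" using eps by (simp add: zero_less_mult_iff)
    qed
  qed simp
  have lo: "\<forall>x\<in>{0..1}. - y x - A/m \<le> 0"
  proof (rule maxp[where w' = "\<lambda>x. - y' x" and w'' = "\<lambda>x. - y'' x"])
    show "continuous_on {0..1} (\<lambda>x. - y x - A/m)" by (intro continuous_intros cont)
    show "- y 0 - A/m \<le> 0" "- y 1 - A/m \<le> 0" using y0 y1 A0 m by auto
    show "\<forall>x\<in>{0<..<1}. ((\<lambda>x. - y x - A/m) has_real_derivative - y' x) (at x)"
      using d1 by (auto intro!: derivative_eq_intros)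
    show "\<forall>x\<in>{0<..<1}. ((\<lambda>x. - y' x) has_real_derivative - y'' x) (at x)"
      using d2 by (auto intro!: derivative_eq_intros)
    show "\<forall>x\<in>{0<..<1}. - y x - A/m > 0 \<longrightarrow> - y'' x > 0"
    proof (intro ballI impI)
      fix x :: real assume x: "x \<in> {0<..<1}" and w: "- y x - A/m > 0"
      have yneg: "y x \<le> 0" using w A0 m by (smt (verit) divide_nonneg_pos)
      have "f (x, 0) - f (x, y x) \<ge> m * (0 - y x)" using mono[rule_format, of x "y x" 0] x yneg by auto
      moreover have "f (x, 0) \<le> A" using A[rule_format, of x] x by (auto simp: abs_le_iff)
      moreover have "m * (- y x) > A" using w m by (simp add: field_simps)
      ultimately have "eps^2 * y'' x < 0" using eq x by auto
      then show "- y'' x > 0" using eps by (simp add: mult_less_0_iff)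
    qed
  qed simp
  show ?thesis using up lo by (auto simp: abs_le_iff)
qed

lemma shift_est:
  fixes y y' y'' :: "real \<Rightarrow> real" and f :: "real \<times> real \<Rightarrow> real"
  assumes eps: "eps > 0" and m: "m > 0" and L: "L > 0" and M: "M \<ge> 0"
    and cont: "continuous_on {0..1} y" and y0: "y 0 = 0" and y1: "y 1 = 0"
    and d1: "\<forall>x\<in>{0<..<1}. (y has_real_derivative y' x) (at x)"
    and d2: "\<forall>x\<in>{0<..<1}. (y' has_real_derivative y'' x) (at x)"
    and eq: "\<forall>x\<in>{0<..<1}. eps^2 * y'' x = f (x, y x)"
    and mono: "\<forall>x\<in>{0..1}. \<forall>u v. u \<le> v \<longrightarrow> f (x, v) - f (x, u) \<ge> m * (v - u)"
    and lip: "\<forall>s\<in>{0..1}. \<forall>t\<in>{0..1}. \<forall>u\<in>{-M..M}. \<forall>v\<in>{-M..M}. \<bar>f (s, u) - f (t, v)\<bar> \<le> L * (\<bar>s - t\<bar> + \<bar>u - v\<bar>)"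
    and yb: "\<forall>x\<in>{0..1}. \<bar>y x\<bar> \<le> M"
    and s: "0 \<le> s" and st: "s < t" and t: "t \<le> 1"
  shows "\<bar>y t - y s\<bar> \<le> L * (t - s) / m + M * (exp (- (sqrt m / eps) * s) + exp (- (sqrt m / eps) * (1 - t)))"
proof (cases "t - s = 1")
  case True
  then have "s = 0" "t = 1" using s t by auto
  then show ?thesis using y0 y1 L m M by simp
next
  case False
  define c where "c = sqrt m / eps"
  define \<delta> where "\<delta> = t - s"
  define b where "b = 1 - \<delta>"
  have \<delta>: "\<delta> > 0" "\<delta> < 1" using st s t False unfolding \<delta>_def by auto
  have b: "b > 0" "b \<le> 1" using \<delta> unfolding b_def by auto
  have ec: "eps^2 * c^2 = m" using eps m unfolding c_def by (simp add: power_divide)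
  define \<Phi> where "\<Phi> x = L*\<delta>/m + M*(exp(-c*x) + exp(-c*(b-x)))" for x
  define \<Phi>' where "\<Phi>' x = M*(-c*exp(-c*x) + c*exp(-c*(b-x)))" for x
  define \<Phi>'' where "\<Phi>'' x = M*(c^2*exp(-c*x) + c^2*exp(-c*(b-x)))" for x
  have dP: "(\<Phi> has_real_derivative \<Phi>' x) (at x)" for x
    unfolding \<Phi>_def[abs_def] \<Phi>'_def by (auto intro!: derivative_eq_intros simp: algebra_simps)
  have dP': "(\<Phi>' has_real_derivative \<Phi>'' x) (at x)" for x
    unfolding \<Phi>''_def \<Phi>'_def[abs_def] by (auto intro!: derivative_eq_intros simp: algebra_simps power2_eq_square)
  have key: "eps^2 * \<Phi>'' x = m * \<Phi> x - L * \<delta>" for x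
  proof -
    have "eps^2 * \<Phi>'' x = (eps^2*c^2) * M * (exp(-c*x) + exp(-c*(b-x)))"
      unfolding \<Phi>''_def by (simp add: algebra_simps)
    also have "\<dots> = m * \<Phi> x - L * \<delta>" unfolding ec \<Phi>_def using m by (simp add: field_simps)
    finally show ?thesis .
  qed
  have Ppos: "\<Phi> x > 0" for x
  proof -
    have "L*\<delta>/m > 0" using L \<delta> m by simp
    moreover have "M*(exp(-c*x) + exp(-c*(b-x))) \<ge> 0" using M by (simp add: add_nonneg_nonneg)
    ultimately show ?thesis unfolding \<Phi>_def by linarith
  qed
  have P0: "\<Phi> 0 \<ge> M" and Pb: "\<Phi> b \<ge> M"
  proof -
    have "L*\<delta>/m > 0" using L \<delta> m by simp
    moreover have "M*exp(-c*b) \<ge> 0" using M by simp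
    ultimately show "\<Phi> 0 \<ge> M" "\<Phi> b \<ge> M" unfolding \<Phi>_def by (simp_all add: distrib_left)
  qed
  have cs: "continuous_on {0..b} (\<lambda>x. y (x + \<delta>))"
    by (rule continuous_on_compose2[OF cont]) (use \<delta> in \<open>auto intro!: continuous_intros simp: b_def\<close>)
  have cP: "continuous_on {0..b} \<Phi>" unfolding \<Phi>_def[abs_def] by (intro continuous_intros)
  have dy1: "\<forall>x\<in>{0<..<b}. ((\<lambda>x. y (x + \<delta>)) has_real_derivative y' (x + \<delta>)) (at x)"
  proof
    fix x assume "x \<in> {0<..<b}"
    then have "x + \<delta> \<in> {0<..<1}" using \<delta> unfolding b_def by auto
    then show "((\<lambda>x. y (x + \<delta>)) has_real_derivative y' (x + \<delta>)) (at x)"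
      using d1 DERIV_shift by blast
  qed
  have dy2: "\<forall>x\<in>{0<..<b}. ((\<lambda>x. y' (x + \<delta>)) has_real_derivative y'' (x + \<delta>)) (at x)"
  proof
    fix x assume "x \<in> {0<..<b}"
    then have "x + \<delta> \<in> {0<..<1}" using \<delta> unfolding b_def by auto
    then show "((\<lambda>x. y' (x + \<delta>)) has_real_derivative y'' (x + \<delta>)) (at x)"
      using d2 DERIV_shift by blast
  qed
  have inb: "x \<in> {0<..<1}" "x + \<delta> \<in> {0<..<1}" "x \<in> {0..1}" "x + \<delta> \<in> {0..1}" if "x \<in> {0<..<b}" for x
    using that \<delta> unfolding b_def by auto
  have ydel: "\<bar>y \<delta>\<bar> \<le> M" "\<bar>y b\<bar> \<le> M" using yb \<delta> b by auto
  have up: "\<forall>x\<in>{0..b}. y (x + \<delta>) - y x - \<Phi> x \<le> 0"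
  proof (rule maxp[where w' = "\<lambda>x. y' (x + \<delta>) - y' x - \<Phi>' x" and w'' = "\<lambda>x. y'' (x + \<delta>) - y'' x - \<Phi>'' x"])
    show "0 < b" using b by simp
    show "continuous_on {0..b} (\<lambda>x. y (x + \<delta>) - y x - \<Phi> x)"
      using cs cP continuous_on_subset[OF cont, of "{0..b}"] b by (intro continuous_intros) auto
    show "y (0 + \<delta>) - y 0 - \<Phi> 0 \<le> 0" using ydel P0 y0 by auto
    show "y (b + \<delta>) - y b - \<Phi> b \<le> 0" using ydel Pb y1 unfolding b_def by auto
    show "\<forall>x\<in>{0<..<b}. ((\<lambda>x. y (x + \<delta>) - y x - \<Phi> x) has_real_derivative y' (x + \<delta>) - y' x - \<Phi>' x) (at x)"
      using dy1 d1 inb by (auto intro!: derivative_eq_intros dP)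
    show "\<forall>x\<in>{0<..<b}. ((\<lambda>x. y' (x + \<delta>) - y' x - \<Phi>' x) has_real_derivative y'' (x + \<delta>) - y'' x - \<Phi>'' x) (at x)"
      using dy2 d2 inb by (auto intro!: derivative_eq_intros dP')
    show "\<forall>x\<in>{0<..<b}. y (x + \<delta>) - y x - \<Phi> x > 0 \<longrightarrow> y'' (x + \<delta>) - y'' x - \<Phi>'' x > 0"
    proof (intro ballI impI)
      fix x assume x: "x \<in> {0<..<b}" and w: "y (x + \<delta>) - y x - \<Phi> x > 0"
      have uv: "y x \<le> y (x + \<delta>)" using w Ppos[of x] by linarith
      have "\<bar>f (x + \<delta>, y (x + \<delta>)) - f (x, y (x + \<delta>))\<bar> \<le> L * (\<bar>x + \<delta> - x\<bar> + \<bar>y (x + \<delta>) - y (x + \<delta>)\<bar>)"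
      proof -
        have "y (x + \<delta>) \<in> {-M..M}" using yb[rule_format, of "x + \<delta>"] inb[OF x] by (auto simp: abs_le_iff)
        then show ?thesis using lip[rule_format, of "x + \<delta>" x "y (x + \<delta>)" "y (x + \<delta>)"] inb[OF x] by auto
      qed
      then have l1: "f (x + \<delta>, y (x + \<delta>)) - f (x, y (x + \<delta>)) \<ge> - L * \<delta>" using \<delta> by (auto simp: abs_le_iff)
      have l2: "f (x, y (x + \<delta>)) - f (x, y x) \<ge> m * (y (x + \<delta>) - y x)"
        using mono[rule_format, of x "y x" "y (x + \<delta>)"] inb[OF x] uv by auto
      have "eps^2 * (y'' (x + \<delta>) - y'' x - \<Phi>'' x) = f (x + \<delta>, y (x + \<delta>)) - f (x, y x) - (m * \<Phi> x - L * \<delta>)"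
        using eq inb[OF x] key[of x] by (simp add: right_diff_distrib)
      also have "\<dots> \<ge> m * (y (x + \<delta>) - y x - \<Phi> x)" using l1 l2 by (simp add: algebra_simps)
      finally have "eps^2 * (y'' (x + \<delta>) - y'' x - \<Phi>'' x) > 0" using w m
        by (smt (verit) mult_pos_pos)
      then show "y'' (x + \<delta>) - y'' x - \<Phi>'' x > 0" using eps by (simp add: zero_less_mult_iff)
    qed
  qed
  have lo: "\<forall>x\<in>{0..b}. y x - y (x + \<delta>) - \<Phi> x \<le> 0"
  proof (rule maxp[where w' = "\<lambda>x. y' x - y' (x + \<delta>) - \<Phi>' x" and w'' = "\<lambda>x. y'' x - y'' (x + \<delta>) - \<Phi>'' x"])
    show "0 < b" using b by simp
    show "continuous_on {0..b} (\<lambda>x. y x - y (x + \<delta>) - \<Phi> x)"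
      using cs cP continuous_on_subset[OF cont, of "{0..b}"] b by (intro continuous_intros) auto
    show "y 0 - y (0 + \<delta>) - \<Phi> 0 \<le> 0" using ydel P0 y0 by auto
    show "y b - y (b + \<delta>) - \<Phi> b \<le> 0" using ydel Pb y1 unfolding b_def by auto
    show "\<forall>x\<in>{0<..<b}. ((\<lambda>x. y x - y (x + \<delta>) - \<Phi> x) has_real_derivative y' x - y' (x + \<delta>) - \<Phi>' x) (at x)"
      using dy1 d1 inb by (auto intro!: derivative_eq_intros dP)
    show "\<forall>x\<in>{0<..<b}. ((\<lambda>x. y' x - y' (x + \<delta>) - \<Phi>' x) has_real_derivative y'' x - y'' (x + \<delta>) - \<Phi>'' x) (at x)"
      using dy2 d2 inb by (auto intro!: derivative_eq_intros dP')
    show "\<forall>x\<in>{0<..<b}. y x - y (x + \<delta>) - \<Phi> x > 0 \<longrightarrow> y'' x - y'' (x + \<delta>) - \<Phi>'' x > 0"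
    proof (intro ballI impI)
      fix x assume x: "x \<in> {0<..<b}" and w: "y x - y (x + \<delta>) - \<Phi> x > 0"
      have uv: "y (x + \<delta>) \<le> y x" using w Ppos[of x] by linarith
      have "\<bar>f (x, y x) - f (x + \<delta>, y x)\<bar> \<le> L * (\<bar>x - (x + \<delta>)\<bar> + \<bar>y x - y x\<bar>)"
      proof -
        have "y x \<in> {-M..M}" using yb[rule_format, of x] inb[OF x] by (auto simp: abs_le_iff)
        then show ?thesis using lip[rule_format, of x "x + \<delta>" "y x" "y x"] inb[OF x] by auto
      qed
      then have l1: "f (x, y x) - f (x + \<delta>, y x) \<ge> - L * \<delta>" using \<delta> by (auto simp: abs_le_iff)
      have l2: "f (x + \<delta>, y x) - f (x + \<delta>, y (x + \<delta>)) \<ge> m * (y x - y (x + \<delta>))"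
        using mono[rule_format, of "x + \<delta>" "y (x + \<delta>)" "y x"] inb[OF x] uv by auto
      have "eps^2 * (y'' x - y'' (x + \<delta>) - \<Phi>'' x) = f (x, y x) - f (x + \<delta>, y (x + \<delta>)) - (m * \<Phi> x - L * \<delta>)"
        using eq inb[OF x] key[of x] by (simp add: right_diff_distrib)
      also have "\<dots> \<ge> m * (y x - y (x + \<delta>) - \<Phi> x)" using l1 l2 by (simp add: algebra_simps)
      finally have "eps^2 * (y'' x - y'' (x + \<delta>) - \<Phi>'' x) > 0" using w m
        by (smt (verit) mult_pos_pos)
      then show "y'' x - y'' (x + \<delta>) - \<Phi>'' x > 0" using eps by (simp add: zero_less_mult_iff)
    qed
  qed
  have sb: "s \<in> {0..b}" using s t unfolding b_def \<delta>_def by auto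
  have "\<bar>y t - y s\<bar> \<le> \<Phi> s" using up[rule_format, OF sb] lo[rule_format, OF sb] unfolding \<delta>_def by auto
  also have "\<Phi> s = L * (t - s) / m + M * (exp (- (sqrt m / eps) * s) + exp (- (sqrt m / eps) * (1 - t)))"
    unfolding \<Phi>_def \<delta>_def b_def c_def by simp
  finally show ?thesis .
qed

lemma mesh:
  assumes N: "N > 0" "4 dvd N" and lam: "lam = shishkin_lambda eps m N"
  shows "shishkin_node eps m N (N div 4 - 1) = lam - 4*lam/real N"
    and "shishkin_node eps m N (N div 4) = lam"
    and "shishkin_node eps m N (Suc (N div 4)) = lam + 2*(1-2*lam)/real N"
    and "lam \<le> 1/4"
proof -
  obtain n where n: "N = 4*n" using N by (auto simp: dvd_def)
  have n1: "n \<ge> 1" using N n by simp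
  have d4: "N div 4 = n" "3 * N div 4 = 3 * n" using n by simp_all
  show "lam \<le> 1/4" unfolding lam shishkin_lambda_def by simp
  have "shishkin_node eps m N (n - 1) = real (n - 1) * (4 * lam / real (4*n))"
    unfolding shishkin_node_def Let_def lam[symmetric] using d4 n by simp
  also have "\<dots> = lam - 4*lam/real N" using n1 unfolding n by (simp add: of_nat_diff field_simps)
  finally show "shishkin_node eps m N (N div 4 - 1) = lam - 4*lam/real N" using d4 by simp
  have "shishkin_node eps m N n = real n * (4 * lam / real (4*n))"
    unfolding shishkin_node_def Let_def lam[symmetric] using d4 n by simp
  also have "\<dots> = lam" using n1 by (simp add: field_simps)
  finally show "shishkin_node eps m N (N div 4) = lam" using d4 by simp
  have "shishkin_node eps m N (Suc n) = lam + real (Suc n - n) * (2 * (1 - 2 * lam) / real N)"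
    unfolding shishkin_node_def Let_def lam[symmetric] using d4 n n1 by simp
  then show "shishkin_node eps m N (Suc (N div 4)) = lam + 2*(1-2*lam)/real N" using d4 by simp
qed

lemma exp_bound:
  assumes N: "N > 0" "4 dvd N"
  shows "exp (- (2 * ln (real N) * (1 - 4 / real N))) \<le> 4 / real N"
proof (cases "N = 4")
  case True then show ?thesis by simp
next
  case False
  obtain n where n: "N = 4*n" using N by (auto simp: dvd_def)
  have "n \<ge> 2" using N n False by (cases n; cases "n - 1") auto
  then have N8: "real N \<ge> 8" using n by simp
  have lnpos: "ln (real N) > 0" using N8 by simp
  have "2 * (1 - 4 / real N) \<ge> 1" using N8 by (simp add: field_simps)
  then have "2 * ln (real N) * (1 - 4 / real N) \<ge> ln (real N)"
  proof -
    have "ln (real N) * 1 \<le> ln (real N) * (2 * (1 - 4 / real N))"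
      by (rule mult_left_mono) (use lnpos \<open>2 * (1 - 4 / real N) \<ge> 1\<close> in auto)
    then show ?thesis by (simp add: algebra_simps)
  qed
  then have "exp (- (2 * ln (real N) * (1 - 4 / real N))) \<le> exp (- ln (real N))" by simp
  also have "\<dots> = 1 / real N" using N by (simp add: exp_minus inverse_eq_divide)
  also have "\<dots> \<le> 4 / real N" using N by (simp add: divide_right_mono)
  finally show ?thesis .
qed

lemma dd_pos:
  fixes bt l :: real
  assumes "bt > 0" "l > 0"
  shows "bt / tanh (bt*l) - bt / sinh (bt*l) > 0"
proof -
  have z: "bt*l > 0" using assms by (rule mult_pos_pos)
  have s: "sinh (bt*l) > 0" using z by simp
  have c: "cosh (bt*l) > 1" using cosh_real_nonneg_less_iff[of 0 "bt*l"] z by simp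
  have "bt / tanh (bt*l) - bt / sinh (bt*l) = bt * (cosh (bt*l) - 1) / sinh (bt*l)"
  proof -
    have "sinh (bt*l) \<noteq> 0" "cosh (bt*l) \<noteq> 0" using s c by auto
    then show ?thesis unfolding tanh_def by (simp add: field_simps)
  qed
  also have "\<dots> > 0" using assms s c by simp
  finally show ?thesis .
qed

lemma bracket_eq:
  fixes gam :: real
  assumes "gam \<noteq> 0"
  shows "(a1+d1)/2*z0 - ((a1+d1)/2 + (a2+d2)/2)*z1 + (a2+d2)/2*z2 - (d1-a1)/gam*f1 - (d2-a2)/gam*f2
   = (a2*z2 - d2*z1 - (d2-a2)*(f2 - gam*((z1+z2)/2))/gam) - (d1*z1 - a1*z0 + (d1-a1)*(f1 - gam*((z0+z1)/2))/gam)"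
  using assms by (simp add: field_simps)

lemma final_bound:
  fixes gam :: real
  assumes gam: "gam > 0" and dd1: "dd1 > 0" and dd2: "dd2 > 0"
    and b1: "\<bar>Y - X1\<bar> \<le> dd1 * \<sigma> / gam" and b2: "\<bar>Y - X2\<bar> \<le> dd2 * \<sigma> / gam"
  shows "\<bar>gam / (dd1 + dd2) * (X2 - X1)\<bar> \<le> \<sigma>"
proof -
  have "\<bar>X2 - X1\<bar> \<le> (dd1 + dd2) * \<sigma> / gam"
    using b1 b2 by (simp add: abs_le_iff add_divide_distrib distrib_right)
  then have "gam / (dd1 + dd2) * \<bar>X2 - X1\<bar> \<le> gam / (dd1 + dd2) * ((dd1 + dd2) * \<sigma> / gam)"
    using gam dd1 dd2 by (intro mult_left_mono) auto
  also have "\<dots> = \<sigma>" using gam dd1 dd2 by simp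
  finally show ?thesis using gam dd1 dd2 by (simp add: abs_mult)
qed

theorem lemma2:
  fixes f fx fy fxx fxy fyx fyy :: "real \<times> real \<Rightarrow> real"
    and m gam C0 :: real
  assumes "C2_with_partials f fx fy fxx fxy fyx fyy strip"
    and "m > 0"
    and "\<forall>z\<in>strip. fy z \<ge> m"
    and "\<forall>z\<in>strip. gam \<ge> fy z"
    and "C0 > 0"
  shows "\<exists>C>0. \<forall>eps (N::nat) y.
           eps > 0 \<and> N > 0 \<and> 4 dvd N \<and>
           shishkin_lambda eps m N = 2 * eps * ln (real N) / sqrt m \<and>
           eps \<le> C0 / real N \<and> bvp_solution eps f y \<longrightarrow>
           \<bar>scheme_F gam eps f N (shishkin_node eps m N) (\<lambda>i. y (shishkin_node eps m N i)) (N div 4)\<bar>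
             \<le> C / real N"
proof -
  have m: "m > 0" using assms(2) .
  have "(0::real, 0::real) \<in> strip" unfolding strip_def by simp
  then have "m \<le> fy (0,0)" "fy (0,0) \<le> gam" using assms(3,4) by auto
  then have gam: "gam > 0" using m by linarith
  have gnz: "gam \<noteq> 0" using gam by simp
  have mono: "\<forall>x\<in>{0..1}. \<forall>u v. u \<le> v \<longrightarrow> f (x, v) - f (x, u) \<ge> m * (v - u)"
    using f_mono[OF assms(1) assms(3)] by blast
  have cf: "continuous_on {0..1} (\<lambda>x. \<bar>f (x, 0)\<bar>)"
    by (intro continuous_intros continuous_on_compose2[OF f_cont[OF assms(1)]]) (auto simp: strip_def)
  obtain x0 where "x0 \<in> {0..1::real}" and x0: "\<forall>x\<in>{0..1}. \<bar>f (x, 0)\<bar> \<le> \<bar>f (x0, 0)\<bar>"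
    using continuous_attains_sup[OF compact_Icc _ cf] by auto
  define A where "A = \<bar>f (x0, 0)\<bar>"
  define M where "M = A / m"
  have M0: "M \<ge> 0" unfolding M_def A_def using m by simp
  obtain L where L: "L > 0" and lip: "\<forall>s\<in>{0..1}. \<forall>t\<in>{0..1}. \<forall>u\<in>{-M..M}. \<forall>v\<in>{-M..M}.
           \<bar>f (s, u) - f (t, v)\<bar> \<le> L * (\<bar>s - t\<bar> + \<bar>u - v\<bar>)"
    using f_lip[OF assms(1) M0] by blast
  define C where "C = L + (L + gam) * (3*L/m + 8*M)"
  have Cpos: "C > 0" unfolding C_def using L gam m M0 by (simp add: add_pos_nonneg)
  show ?thesis
  proof (intro exI[of _ C] conjI allI impI Cpos)
    fix eps :: real and N :: nat and y :: "real \<Rightarrow> real"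
    assume H: "eps > 0 \<and> N > 0 \<and> 4 dvd N \<and>
           shishkin_lambda eps m N = 2 * eps * ln (real N) / sqrt m \<and>
           eps \<le> C0 / real N \<and> bvp_solution eps f y"
    have eps: "eps > 0" and N: "N > 0" "4 dvd N" and lamdef: "shishkin_lambda eps m N = 2 * eps * ln (real N) / sqrt m"
      and bvp: "bvp_solution eps f y" using H by auto
    obtain y' y'' where cont: "continuous_on {0..1} y" and y0: "y 0 = 0" and y1: "y 1 = 0"
      and yd: "\<forall>x\<in>{0<..<1}. (y has_real_derivative y' x) (at x) \<and> (y' has_real_derivative y'' x) (at x) \<and> eps\<^sup>2 * y'' x = f (x, y x)"
      using bvp unfolding bvp_solution_def by blast
    have d1: "\<forall>x\<in>{0<..<1}. (y has_real_derivative y' x) (at x)" using yd by blast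
    have d2: "\<forall>x\<in>{0<..<1}. (y' has_real_derivative y'' x) (at x)" using yd by blast
    have eq: "\<forall>x\<in>{0<..<1}. eps^2 * y'' x = f (x, y x)" using yd by blast
    have Abnd: "\<forall>x\<in>{0..1}. \<bar>f (x, 0)\<bar> \<le> A" using x0 unfolding A_def by blast
    have yb: "\<forall>x\<in>{0..1}. \<bar>y x\<bar> \<le> M"
      using ybound[OF eps m cont y0 y1 d1 d2 eq mono Abnd] unfolding M_def .
    define lam where "lam = shishkin_lambda eps m N"
    have N4: "real N \<ge> 4" using N by (auto dest!: dvd_imp_le)
    have lampos: "lam > 0" unfolding lam_def lamdef using eps m N4 by simp
    have lam4: "lam \<le> 1/4" using mesh(4)[OF N lam_def] .
    define h where "h = 4*lam/real N"
    define HH where "HH = 2*(1-2*lam)/real N"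
    define p0 where "p0 = lam - h"
    define p1 where "p1 = lam"
    define p2 where "p2 = lam + HH"
    have X0: "shishkin_node eps m N (N div 4 - 1) = p0" using mesh(1)[OF N lam_def] unfolding p0_def h_def .
    have X1: "shishkin_node eps m N (N div 4) = p1" using mesh(2)[OF N lam_def] unfolding p1_def .
    have X2: "shishkin_node eps m N (Suc (N div 4)) = p2" using mesh(3)[OF N lam_def] unfolding p2_def HH_def .
    have hpos: "h > 0" and hle: "h \<le> 1 / real N" unfolding h_def using lampos lam4 N4
      by (auto simp: divide_right_mono)
    have Hpos: "HH > 0" and Hle: "HH \<le> 2 / real N" unfolding HH_def using lampos lam4 N4
      by (auto simp: divide_right_mono)
    have hlam: "h \<le> lam" unfolding h_def using lampos N4 by (simp add: field_simps)
    have Nhalf: "2 / real N \<le> 1/2" using N4 by (simp add: field_simps)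
    have p0: "p0 \<ge> 0" unfolding p0_def using hlam by simp
    have p01: "p0 < p1" unfolding p0_def p1_def using hpos by simp
    have p12: "p1 < p2" unfolding p2_def p1_def using Hpos by simp
    have p2: "p2 \<le> 3/4" unfolding p2_def using lam4 Hle Nhalf by simp
    have p02: "p0 + p2 \<le> 1" unfolding p0_def p2_def using lam4 Hle Nhalf hpos by simp
    have width: "p2 - p0 \<le> 3 / real N" unfolding p0_def p2_def using hle Hle by simp
    define c where "c = sqrt m / eps"
    have cpos: "c > 0" unfolding c_def using eps m by simp
    have cp0: "c * p0 = 2 * ln (real N) * (1 - 4 / real N)"
    proof -
      have "c * lam = 2 * ln (real N)" unfolding c_def lam_def lamdef using eps m by simp
      then show ?thesis unfolding p0_def h_def by (simp add: algebra_simps)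
    qed
    have E1: "exp (- c * p0) \<le> 4 / real N" using exp_bound[OF N] cp0 by simp
    define D where "D = 3*L/(m * real N) + 8*M/real N"
    have osc: "\<bar>y t - y s\<bar> \<le> D" if st: "s \<in> {p0..p2}" "t \<in> {p0..p2}" for s t
    proof -
      have gen: "\<bar>y t - y s\<bar> \<le> D" if st: "s \<in> {p0..p2}" "t \<in> {p0..p2}" "s < t" for s t
      proof -
        have "\<bar>y t - y s\<bar> \<le> L * (t - s) / m + M * (exp (- c * s) + exp (- c * (1 - t)))"
          using shift_est[OF eps m L M0 cont y0 y1 d1 d2 eq mono lip yb, of s t] st p0 p2
          unfolding c_def by auto
        also have "\<dots> \<le> L * (3 / real N) / m + M * (4 / real N + 4 / real N)"
        proof -
          have a1: "L * (t - s) \<le> L * (3 / real N)" using st width L by (intro mult_left_mono) auto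
          have "exp (- c * s) \<le> exp (- c * p0)" using st cpos by (simp add: mult_left_mono)
          then have a2: "exp (- c * s) \<le> 4 / real N" using E1 by linarith
          have "1 - t \<ge> p0" using st p02 by simp
          then have "exp (- c * (1 - t)) \<le> exp (- c * p0)" using cpos by (simp add: mult_left_mono)
          then have a3: "exp (- c * (1 - t)) \<le> 4 / real N" using E1 by linarith
          have "L * (t - s) / m \<le> L * (3 / real N) / m" by (rule divide_right_mono[OF a1]) (use m in simp)
          moreover have "M * (exp (- c * s) + exp (- c * (1 - t))) \<le> M * (4 / real N + 4 / real N)"
            using a2 a3 M0 by (intro mult_left_mono add_mono) auto
          ultimately show ?thesis by linarith
        qed
        also have "\<dots> = D" unfolding D_def by (simp add: field_simps)
        finally show ?thesis .
      qed
      show ?thesis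
      proof (cases s t rule: linorder_cases)
        case less then show ?thesis using gen st by blast
      next
        case equal then show ?thesis unfolding D_def using L m M0 by simp
      next
        case greater then show ?thesis using gen[of t s] st by (simp add: abs_minus_commute)
      qed
    qed
    define \<sigma> where "\<sigma> = C / real N"
    have intv: "\<forall>x\<in>{p<..<q}. (f ((p+q)/2, (y p + y q)/2) - gam*((y p + y q)/2)) - \<sigma> \<le> eps^2 * y'' x - gam * y x
        \<and> eps^2 * y'' x - gam * y x \<le> (f ((p+q)/2, (y p + y q)/2) - gam*((y p + y q)/2)) + \<sigma>"
      if pq: "p0 \<le> p" "p < q" "q \<le> p2" "q - p \<le> 2 / real N" for p q
    proof
      fix x assume x: "x \<in> {p<..<q}"
      have x01: "x \<in> {0<..<1}" using x pq p0 p2 by auto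
      have inM: "y z \<in> {-M..M}" if "z \<in> {0..1}" for z
        using yb[rule_format, OF that] by (auto simp: abs_le_iff)
      have pq01: "p \<in> {0..1}" "q \<in> {0..1}" using pq p0 p2 by auto
      have avgM: "(y p + y q)/2 \<in> {-M..M}" using inM[OF pq01(1)] inM[OF pq01(2)] by auto
      have ox1: "\<bar>y x - y p\<bar> \<le> D" using osc[of p x] x pq by auto
      have ox2: "\<bar>y x - y q\<bar> \<le> D" using osc[of q x] x pq by auto
      have oa: "\<bar>y x - (y p + y q)/2\<bar> \<le> D" using ox1 ox2 by (simp add: abs_le_iff field_simps)
      have om: "\<bar>x - (p+q)/2\<bar> \<le> 1 / real N"
      proof -
        define k where "k = 1 / real N"
        have "2 / real N = 2 * k" unfolding k_def by simp
        then have "q - p \<le> 2 * k" using pq by simp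
        then have "\<bar>x - (p+q)/2\<bar> \<le> k" using x unfolding abs_le_iff by (auto simp: field_simps)
        then show ?thesis unfolding k_def .
      qed
      have "\<bar>f (x, y x) - f ((p+q)/2, (y p + y q)/2)\<bar> \<le> L * (\<bar>x - (p+q)/2\<bar> + \<bar>y x - (y p + y q)/2\<bar>)"
        using lip[rule_format, of x "(p+q)/2" "y x" "(y p + y q)/2"] x01 pq01 inM[of x] avgM by auto
      also have "\<dots> \<le> L * (1 / real N + D)" using om oa L by (intro mult_left_mono) auto
      finally have fb: "\<bar>f (x, y x) - f ((p+q)/2, (y p + y q)/2)\<bar> \<le> L * (1 / real N + D)" .
      have gb: "\<bar>gam * y x - gam * ((y p + y q)/2)\<bar> \<le> gam * D"
      proof -
        have "gam * y x - gam * ((y p + y q)/2) = gam * (y x - (y p + y q)/2)" by (simp add: algebra_simps)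
        then have "\<bar>gam * y x - gam * ((y p + y q)/2)\<bar> = gam * \<bar>y x - (y p + y q)/2\<bar>"
          using gam by (simp add: abs_mult)
        then show ?thesis using oa gam by (simp add: mult_left_mono)
      qed
      have "L * (1 / real N + D) + gam * D = \<sigma>" unfolding \<sigma>_def C_def D_def using m N4
        by (simp add: field_simps)
      then have tot: "\<bar>(f (x, y x) - gam * y x) - (f ((p+q)/2, (y p + y q)/2) - gam*((y p + y q)/2))\<bar> \<le> \<sigma>"
        using fb gb by (simp add: abs_le_iff)
      show "(f ((p+q)/2, (y p + y q)/2) - gam*((y p + y q)/2)) - \<sigma> \<le> eps^2 * y'' x - gam * y x
        \<and> eps^2 * y'' x - gam * y x \<le> (f ((p+q)/2, (y p + y q)/2) - gam*((y p + y q)/2)) + \<sigma>"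
        using tot eq x01 by (simp add: abs_le_iff)
    qed
    have p1in: "p1 \<in> {0<..<1}" using p01 p12 p0 p2 by auto
    have Dy: "(y has_real_derivative y' p1) (at p1)" using d1 p1in by blast
    have contsub: "continuous_on {p..q} y" if "p0 \<le> p" "q \<le> p2" for p q
      using continuous_on_subset[OF cont] that p0 p2 by auto
    have d1s: "\<forall>x\<in>{p<..<q}. (y has_real_derivative y' x) (at x)" if "p0 \<le> p" "q \<le> p2" for p q
      using d1 that p0 p2 by auto
    have d2s: "\<forall>x\<in>{p<..<q}. (y' has_real_derivative y'' x) (at x)" if "p0 \<le> p" "q \<le> p2" for p q
      using d2 that p0 p2 by auto
    define bt where "bt = sqrt gam / eps"
    have bt: "bt > 0" unfolding bt_def using gam eps by simp
    define dA where "dA = bt / tanh (bt*(p1-p0))"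
    define aA where "aA = bt / sinh (bt*(p1-p0))"
    define dB where "dB = bt / tanh (bt*(p2-p1))"
    define aB where "aB = bt / sinh (bt*(p2-p1))"
    define G1 where "G1 = f ((p0+p1)/2, (y p0 + y p1)/2) - gam*((y p0 + y p1)/2)"
    define G2 where "G2 = f ((p1+p2)/2, (y p1 + y p2)/2) - gam*((y p1 + y p2)/2)"
    have w1: "p1 - p0 \<le> 2 / real N" using hle N4 unfolding p0_def p1_def by (simp add: field_simps)
    have w2: "p2 - p1 \<le> 2 / real N" using Hle unfolding p2_def p1_def by simp
    have FA: "\<bar>y' p1 - (dA * y p1 - aA * y p0 + (dA - aA) * G1 / gam)\<bar> \<le> (dA - aA) * \<sigma> / gam"
      using flux(1)[OF eps gam p01 contsub[OF order_refl less_imp_le[OF p12]] d1s[OF order_refl less_imp_le[OF p12]]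
          d2s[OF order_refl less_imp_le[OF p12]] intv[OF order_refl p01 less_imp_le[OF p12] w1] Dy]
      unfolding dA_def aA_def G1_def bt_def by simp
    have FB: "\<bar>y' p1 - (aB * y p2 - dB * y p1 - (dB - aB) * G2 / gam)\<bar> \<le> (dB - aB) * \<sigma> / gam"
      using flux(2)[OF eps gam p12 contsub[OF less_imp_le[OF p01] order_refl] d1s[OF less_imp_le[OF p01] order_refl]
          d2s[OF less_imp_le[OF p01] order_refl] intv[OF less_imp_le[OF p01] p12 order_refl w2] Dy]
      unfolding dB_def aB_def G2_def bt_def by simp
    have ddA: "dA - aA > 0" unfolding dA_def aA_def using dd_pos[OF bt] p01 by simp
    have ddB: "dB - aB > 0" unfolding dB_def aB_def using dd_pos[OF bt] p12 by simp
    have i0: "N div 4 \<noteq> 0" "N div 4 \<noteq> N" using N N4 by (auto dest!: dvd_imp_le)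
    have "scheme_F gam eps f N (shishkin_node eps m N) (\<lambda>i. y (shishkin_node eps m N i)) (N div 4)
       = gam / ((dA - aA) + (dB - aB)) *
         ((aA+dA)/2*y p0 - ((aA+dA)/2 + (aB+dB)/2)*y p1 + (aB+dB)/2*y p2
          - (dA-aA)/gam*f ((p0+p1)/2, (y p0 + y p1)/2) - (dB-aB)/gam*f ((p1+p2)/2, (y p1 + y p2)/2))"
      unfolding scheme_F_def Let_def using i0 X0 X1 X2
      by (simp add: dA_def aA_def dB_def aB_def bt_def)
    also have "\<dots> = gam / ((dA - aA) + (dB - aB)) *
         ((aB*y p2 - dB*y p1 - (dB-aB)*G2/gam) - (dA*y p1 - aA*y p0 + (dA-aA)*G1/gam))"
      unfolding G1_def G2_def by (simp only: bracket_eq[OF gnz])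
    finally have "\<bar>scheme_F gam eps f N (shishkin_node eps m N) (\<lambda>i. y (shishkin_node eps m N i)) (N div 4)\<bar> \<le> \<sigma>"
      using final_bound[OF gam ddA ddB FA FB] by simp
    then show "\<bar>scheme_F gam eps f N (shishkin_node eps m N) (\<lambda>i. y (shishkin_node eps m N i)) (N div 4)\<bar> \<le> C / real N"
      unfolding \<sigma>_def .
  qed
qed

end
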